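(* Let $n \geq 2$ and let $\mathbb{F}_q$ be a finite field. Every nonzero element of $\operatorname{Mat}_n(\mathbb{F}_q)$ can be written as a sum of two matrices in $\operatorname{SL}_n(\mathbb{F}_q)$. If $n$ is even or $\operatorname{char}(\mathbb{F}_q) = 2$, then the zero matrix can be written as a sum of two matrices in $\operatorname{SL}_n(\mathbb{F}_q)$; otherwise the zero matrix cannot be written as a sum of two matrices in $\operatorname{SL}_n(\mathbb{F}_q)$ but can be written as a sum of three.
   Context: $\operatorname{SL}_n(\mathbb{F}_q)$ is the set of $n\times n$ matrices over $\mathbb{F}_q$ of determinant $1$. *)

theory Defs
  imports "HOL-Analysis.Analysis"
begin

definition SL :: "('a::comm_ring_1 ^ 'n ^ 'n) set" where
  "SL = {A. det A = 1}"

end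

theory Submission
  imports Defs
begin


lemma perm_le_id:
  fixes r :: "'n::finite \<Rightarrow> nat"
  assumes r: "inj r" and p: "p permutes (UNIV::'n set)" and le: "\<And>i. r (p i) \<le> r i"
  shows "p = id"
proof -
  have eq: "sum (r \<circ> p) UNIV = sum r UNIV"
    using sum.permute[OF p, of r] by simp
  have "\<forall>i. r (p i) = r i"
  proof (rule ccontr)
    assume "\<not> (\<forall>i. r (p i) = r i)"
    then obtain i where "r (p i) < r i" using le le_neq_implies_less by blast
    then have "sum (r \<circ> p) UNIV < sum r UNIV"
      by (intro sum_strict_mono_ex1) (auto simp: le)
    with eq show False by simp
  qed
  then show ?thesis using r by (auto simp: inj_def)
qed

lemma det_lower_r:
  fixes A :: "'a::comm_ring_1^'n^'n" and r :: "'n \<Rightarrow> nat"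
  assumes r: "inj r" and ld: "\<And>i j. r i < r j \<Longrightarrow> A$i$j = 0"
  shows "det A = prod (\<lambda>i. A$i$i) (UNIV:: 'n set)"
proof -
  let ?U = "UNIV:: 'n set"
  let ?PU = "{p. p permutes ?U}"
  let ?pp = "\<lambda>p. of_int (sign p) * prod (\<lambda>i. A$i$p i) (UNIV :: 'n set)"
  have fU: "finite ?U"
    by simp
  have id0: "{id} \<subseteq> ?PU"
    by (auto simp: permutes_id)
  have p0: "\<forall>p \<in> ?PU - {id}. ?pp p = 0"
  proof
    fix p
    assume pp: "p \<in> ?PU - {id}"
    then obtain i where i: "r i < r (p i)"
      using perm_le_id[OF r, of p] by (metis DiffD1 DiffD2 mem_Collect_eq not_le singletonI)
    from ld[OF i] have "\<exists>i \<in> ?U. A$i$p i = 0"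
      by blast
    with prod_zero[OF fU] show "?pp p = 0"
      by force
  qed
  from sum.mono_neutral_cong_left[OF finite_permutations[OF fU] id0 p0] show ?thesis
    unfolding det_def by (simp add: sign_id)
qed

lemma det_upper_r:
  fixes A :: "'a::comm_ring_1^'n^'n" and r :: "'n \<Rightarrow> nat"
  assumes r: "inj r" and ld: "\<And>i j. r j < r i \<Longrightarrow> A$i$j = 0"
  shows "det A = prod (\<lambda>i. A$i$i) (UNIV:: 'n set)"
proof -
  have "det (transpose A) = prod (\<lambda>i. (transpose A)$i$i) UNIV"
    by (rule det_lower_r[OF r]) (simp add: transpose_def ld)
  then show ?thesis unfolding det_transpose by (simp add: transpose_def)
qed



definition S2 :: "('a::comm_ring_1^'n^'n) \<Rightarrow> bool" where
  "S2 A \<longleftrightarrow> (\<exists>B\<in>SL. \<exists>C\<in>SL. A = B + C)"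

lemma det_neg: "det (- A) = (-1) ^ CARD('n) * det (A::'a::comm_ring_1^'n^'n)"
proof -
  have "\<And>p. (\<Prod>i\<in>UNIV. (- A) $ i $ p i) = (-1) ^ CARD('n) * (\<Prod>i\<in>UNIV. A $ i $ p i)"
  proof -
    fix p
    have "(\<Prod>i\<in>UNIV. (- A) $ i $ p i) = (\<Prod>i\<in>(UNIV::'n set). (-1) * A $ i $ p i)" by simp
    also have "\<dots> = (\<Prod>i\<in>(UNIV::'n set). (-1::'a)) * (\<Prod>i\<in>UNIV. A $ i $ p i)"
      by (rule prod.distrib)
    also have "\<dots> = (-1) ^ CARD('n) * (\<Prod>i\<in>UNIV. A $ i $ p i)"
      by simp
    finally show "?thesis p" .
  qed
  then show ?thesis unfolding det_def by (simp add: sum_distrib_left algebra_simps)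
qed

lemma tri_S2:
  fixes M :: "'a::comm_ring_1^'n^'n" and r :: "'n \<Rightarrow> nat"
  assumes r: "inj r" and b1: "prod b UNIV = 1" and b2: "(\<Prod>i\<in>UNIV. M$i$i - b i) = 1"
  shows "S2 M"
proof -
  define B :: "'a^'n^'n" where "B = (\<chi> i j. if r j < r i then M$i$j else if i = j then b i else 0)"
  have "det B = prod (\<lambda>i. B$i$i) UNIV"
    by (rule det_lower_r[OF r]) (auto simp: B_def)
  then have dB: "det B = 1" using b1 by (simp add: B_def)
  have "det (M - B) = prod (\<lambda>i. (M - B)$i$i) UNIV"
    by (rule det_upper_r[OF r]) (auto simp: B_def)
  then have dC: "det (M - B) = 1" using b2 by (simp add: B_def)
  show ?thesis unfolding S2_def SL_def using dB dC
    by (intro bexI[of _ B] bexI[of _ "M - B"]) auto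
qed

lemma matrix_add_rdistrib': "((B + C) ** A) = (B ** A) + (C ** A)"
  by (simp add: matrix_matrix_mult_def vec_eq_iff distrib_right sum.distrib)

lemma S2_back:
  fixes A P Q :: "'a::field^'n^'n"
  assumes S: "S2 (P ** A ** Q)" and dP: "det P = 1" and dQ: "det Q = 1"
  shows "S2 A"
proof -
  obtain P' where P1: "P ** P' = mat 1" and P2: "P' ** P = mat 1"
    using dP invertible_det_nz[of P] unfolding invertible_def by auto
  obtain Q' where Q1: "Q ** Q' = mat 1" and Q2: "Q' ** Q = mat 1"
    using dQ invertible_det_nz[of Q] unfolding invertible_def by auto
  have dP': "det P' = 1" using det_mul[of P P'] P1 dP by simp
  have dQ': "det Q' = 1" using det_mul[of Q Q'] Q1 dQ by simp
  obtain B C where B: "det B = 1" and C: "det C = 1" and BC: "P ** A ** Q = B + C"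
    using S unfolding S2_def SL_def by auto
  have "P' ** (P ** A ** Q) ** Q' = (P' ** P) ** A ** (Q ** Q')"
    by (simp add: matrix_mul_assoc)
  then have "A = P' ** (P ** A ** Q) ** Q'"
    by (simp add: P2 Q1)
  also have "\<dots> = P' ** B ** Q' + P' ** C ** Q'"
    by (simp add: BC matrix_add_ldistrib matrix_add_rdistrib')
  finally show ?thesis unfolding S2_def SL_def using B C dP' dQ'
    by (intro bexI[of _ "P' ** B ** Q'"] bexI[of _ "P' ** C ** Q'"]) (auto simp: det_mul)
qed



lemma ex_inj_nat: "\<exists>r::'n::finite \<Rightarrow> nat. inj r"
  using finite_imp_inj_to_nat_seg[of "UNIV::'n set"] by auto

lemma ex_inj_min: "\<exists>r::'n::finite \<Rightarrow> nat. inj r \<and> r u = 0 \<and> (\<forall>i. i \<noteq> u \<longrightarrow> r i > 0)"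
proof -
  obtain r :: "'n \<Rightarrow> nat" where r: "inj r" using ex_inj_nat by blast
  define r' where "r' i = (if i = u then 0 else Suc (r i))" for i
  have "inj r'" using r unfolding inj_def r'_def by auto
  then show ?thesis by (intro exI[of _ r']) (auto simp: r'_def)
qed

definition Pm :: "'n \<Rightarrow> ('n \<Rightarrow> 'a::comm_ring_1) \<Rightarrow> 'a^'n^'n" where
  "Pm u x = (\<chi> i j. (if i = j then 1 else 0) + (if j = u \<and> i \<noteq> u then x i else 0))"

definition Qm :: "'n \<Rightarrow> ('n \<Rightarrow> 'a::comm_ring_1) \<Rightarrow> 'a^'n^'n" where
  "Qm v y = (\<chi> i j. (if i = j then 1 else 0) + (if i = v \<and> j \<noteq> v then y j else 0))"

lemma det_Pm: "det (Pm u x :: 'a::comm_ring_1^'n::finite^'n) = 1"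
proof -
  obtain r :: "'n \<Rightarrow> nat" where r: "inj r" "r u = 0" "\<And>i. i \<noteq> u \<Longrightarrow> r i > 0"
    using ex_inj_min[of u] by blast
  have "det (Pm u x) = prod (\<lambda>i. (Pm u x)$i$i) UNIV"
    by (rule det_lower_r[OF r(1)]) (auto simp: Pm_def r(2))
  then show ?thesis by (simp add: Pm_def)
qed

lemma det_Qm: "det (Qm v y :: 'a::comm_ring_1^'n::finite^'n) = 1"
proof -
  obtain r :: "'n \<Rightarrow> nat" where r: "inj r" "r v = 0" "\<And>i. i \<noteq> v \<Longrightarrow> r i > 0"
    using ex_inj_min[of v] by blast
  have "det (Qm v y) = prod (\<lambda>i. (Qm v y)$i$i) UNIV"
    by (rule det_upper_r[OF r(1)]) (auto simp: Qm_def r(2))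
  then show ?thesis by (simp add: Qm_def)
qed

lemma Pm_mult: "(Pm u x ** A)$i$j = (if i = u then A$u$j else A$i$j + x i * A$u$j)"
proof -
  have "(Pm u x ** A)$i$j = (\<Sum>k\<in>UNIV. (if i = k then A$k$j else 0) + (if k = u \<and> i \<noteq> u then x i * A$k$j else 0))"
    unfolding Pm_def matrix_matrix_mult_def by (simp, intro sum.cong) (auto simp: distrib_right)
  also have "\<dots> = (\<Sum>k\<in>UNIV. (if i = k then A$k$j else 0)) + (\<Sum>k\<in>UNIV. (if k = u \<and> i \<noteq> u then x i * A$k$j else 0))"
    by (rule sum.distrib)
  also have "\<dots> = (if i = u then A$u$j else A$i$j + x i * A$u$j)"
    by (cases "i = u") auto
  finally show ?thesis .
qed

lemma Qm_mult: "(A ** Qm v y)$i$j = A$i$j + (if j \<noteq> v then A$i$v * y j else 0)"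
proof -
  have "(A ** Qm v y)$i$j = (\<Sum>k\<in>UNIV. (if k = j then A$i$k else 0) + (if k = v \<and> j \<noteq> v then A$i$k * y j else 0))"
    unfolding Qm_def matrix_matrix_mult_def by (simp, intro sum.cong) (auto simp: distrib_left)
  also have "\<dots> = (\<Sum>k\<in>UNIV. (if k = j then A$i$k else 0)) + (\<Sum>k\<in>UNIV. (if k = v \<and> j \<noteq> v then A$i$k * y j else 0))"
    by (rule sum.distrib)
  also have "\<dots> = A$i$j + (if j \<noteq> v then A$i$v * y j else 0)"
    by (cases "j = v") auto
  finally show ?thesis .
qed



lemma OFF:
  fixes A :: "'a::field^'n^'n"
  assumes uv: "u \<noteq> v" and Auv: "A$u$v \<noteq> 0"
    and cond: "(-1::'a)^CARD('n) = 1 \<or> ((2::'a) \<noteq> 0 \<and> odd CARD('n))"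
  shows "S2 A"
proof -
  define x where "x i = (if i = v then - A$v$v / A$u$v else (1 - A$i$v) / A$u$v)" for i
  define A' where "A' = Pm u x ** A"
  have c1: "A'$v$v = 0" using uv Auv by (simp add: A'_def Pm_mult x_def)
  have c2: "A'$j$v \<noteq> 0" if "j \<noteq> v" for j
    using uv Auv that by (cases "j = u") (auto simp: A'_def Pm_mult x_def)
  have diag: "\<exists>y. \<forall>j. (A' ** Qm v y)$j$j = d j" if dv: "d v = 0" for d
  proof -
    define y where "y j = (d j - A'$j$j) / A'$j$v" for j
    have "(A' ** Qm v y)$j$j = d j" for j
      using c1 c2[of j] dv by (cases "j = v") (auto simp: Qm_mult y_def)
    then show ?thesis by blast
  qed
  obtain r :: "'n \<Rightarrow> nat" where r: "inj r" using ex_inj_nat by blast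
  have key: "S2 (A' ** Qm v y)" if H: "\<forall>j. (A' ** Qm v y)$j$j = d j"
    and good: "prod b UNIV = 1" "(\<Prod>i\<in>UNIV. d i - b i) = 1" for y d b
    using tri_S2[OF r good(1)] good(2) H by simp
  have "\<exists>y. S2 (A' ** Qm v y)"
  proof (cases "(-1::'a)^CARD('n) = 1")
    case True
    obtain y where y: "\<forall>j. (A' ** Qm v y)$j$j = (\<lambda>_. 0) j" using diag[of "\<lambda>_. 0"] by auto
    have "S2 (A' ** Qm v y)"
      by (rule key[OF y, of "\<lambda>_. 1"]) (use True in auto)
    then show ?thesis by blast
  next
    case False
    with cond have two: "(2::'a) \<noteq> 0" and odd: "odd CARD('n)" by auto
    define d where "d j = (if j = u then (1::'a) else 0)" for j
    define b where "b j = (if j = u then 1/2 else if j = v then (2::'a) else 1)" for j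
    obtain y where y: "\<forall>j. (A' ** Qm v y)$j$j = d j" using diag[of d] uv by (auto simp: d_def)
    have fin: "finite (UNIV::'n set)" by simp
    have vin: "v \<in> UNIV - {u}" using uv by auto
    have cardR: "card (UNIV - {u} - {v}) = CARD('n) - 2"
      using uv by (simp add: card_Diff_singleton_if)
    have ge2: "CARD('n) \<ge> 2"
    proof -
      have "card {u, v} \<le> CARD('n)" by (rule card_mono) auto
      then show ?thesis using uv by simp
    qed
    have oddR: "odd (CARD('n) - 2)" using odd ge2 by simp
    have split: "prod f UNIV = f u * (f v * prod f (UNIV - {u} - {v}))" for f :: "'n \<Rightarrow> 'a"
      using prod.remove[OF fin, of u f] prod.remove[of "UNIV - {u}" v f] vin by simp
    have pb: "prod b UNIV = 1"
    proof -
      have "prod b (UNIV - {u} - {v}) = 1" by (rule prod.neutral) (auto simp: b_def)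
      then show ?thesis using split[of b] uv two by (simp add: b_def)
    qed
    have pd: "(\<Prod>i\<in>UNIV. d i - b i) = 1"
    proof -
      have "(\<Prod>i\<in>UNIV - {u} - {v}. d i - b i) = (\<Prod>i\<in>UNIV - {u} - {v}. (-1::'a))"
        by (rule prod.cong) (auto simp: b_def d_def)
      also have "\<dots> = (-1) ^ (CARD('n) - 2)" by (simp add: cardR)
      also have "\<dots> = -1" using oddR by simp
      finally have "(\<Prod>i\<in>UNIV - {u} - {v}. d i - b i) = -1" .
      then show ?thesis using split[of "\<lambda>i. d i - b i"] uv two by (simp add: b_def d_def field_simps)
    qed
    show ?thesis using key[OF y pb pd] by blast
  qed
  then obtain y where "S2 (A' ** Qm v y)" by blast
  then have "S2 (Pm u x ** A ** Qm v y)" by (simp add: A'_def)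
  then show ?thesis by (rule S2_back) (simp_all add: det_Pm det_Qm)
qed



lemma nonzero_S2:
  fixes A :: "'a::{field,finite}^'n^'n"
  assumes n2: "CARD('n) \<ge> 2" and A0: "A \<noteq> 0"
  shows "S2 A"
proof -
  have cond: "(-1::'a)^CARD('n) = 1 \<or> ((2::'a) \<noteq> 0 \<and> odd CARD('n))"
  proof (cases "(2::'a) = 0")
    case True
    then have m: "(-1::'a) = 1" by (metis add_eq_0_iff one_add_one)
    have "(-1::'a)^CARD('n) = 1" unfolding m by simp
    then show ?thesis by simp
  next
    case False
    then show ?thesis by (cases "even CARD('n)") auto
  qed
  obtain i j where ij: "A$i$j \<noteq> 0" using A0 by (metis vec_eq_iff zero_index)
  show ?thesis
  proof (cases "\<exists>u v. u \<noteq> v \<and> A$u$v \<noteq> 0")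
    case True
    then show ?thesis using OFF cond by blast
  next
    case False
    then have ii: "A$i$i \<noteq> 0" and off: "\<And>u v. u \<noteq> v \<Longrightarrow> A$u$v = 0" using ij by (metis)+
    obtain v :: 'n where v: "v \<noteq> i"
    proof -
      have "UNIV \<noteq> {i}" using n2 by (metis One_nat_def card.empty card_insert_disjoint empty_iff finite.emptyI not_less_eq_eq numeral_2_eq_2 order_refl)
      then show ?thesis using that by blast
    qed
    define A1 where "A1 = Pm i (\<lambda>k. if k = v then 1 else 0) ** A"
    have "A1$v$i \<noteq> 0" using v ii off[of v i] by (simp add: A1_def Pm_mult)
    then have "S2 A1" using OFF[of v i A1] v cond by auto
    then have "S2 (Pm i (\<lambda>k. if k = v then 1 else 0) ** A ** mat 1)" by (simp add: A1_def)
    then show ?thesis by (rule S2_back) (simp_all add: det_Pm)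
  qed
qed

lemma char2_iff: "CHAR('a::field) = 2 \<longleftrightarrow> (2::'a) = 0"
proof
  assume "CHAR('a) = 2"
  then show "(2::'a) = 0" using of_nat_eq_0_iff_char_dvd[of 2, where 'a='a] by simp
next
  assume "(2::'a) = 0"
  then have d: "CHAR('a) dvd 2" using of_nat_eq_0_iff_char_dvd[of 2, where 'a='a] by simp
  have n1: "CHAR('a) \<noteq> 1" using of_nat_eq_0_iff_char_dvd[of 1, where 'a='a] by auto
  have "CHAR('a) \<le> 2" using dvd_imp_le[OF d] by simp
  moreover have "CHAR('a) \<noteq> 0"
  proof
    assume "CHAR('a) = 0"
    with d show False by simp
  qed
  ultimately show "CHAR('a) = 2" using n1 by linarith
qed

lemma cond_iff: "(even CARD('n) \<or> CHAR('a::field) = 2) \<longleftrightarrow> (-1::'a)^CARD('n) = 1"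
proof (cases "even CARD('n)")
  case True then show ?thesis by simp
next
  case False
  then have "(-1::'a)^CARD('n) = -1" by simp
  moreover have "(-1::'a) = 1 \<longleftrightarrow> (2::'a) = 0" by (metis add_eq_0_iff one_add_one)
  ultimately show ?thesis using False char2_iff by auto
qed

theorem theorem3p10:
  assumes "CARD('n) \<ge> 2"
  shows "(\<forall>A :: 'a::{field,finite} ^ 'n ^ 'n. A \<noteq> 0 \<longrightarrow> (\<exists>B\<in>SL. \<exists>C\<in>SL. A = B + C))
    \<and> ((even CARD('n) \<or> CHAR('a) = 2) \<longrightarrow>
         (\<exists>B\<in>SL. \<exists>C\<in>SL. (0 :: 'a::{field,finite} ^ 'n ^ 'n) = B + C))
    \<and> (\<not> (even CARD('n) \<or> CHAR('a) = 2) \<longrightarrow>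
         \<not> (\<exists>B\<in>SL. \<exists>C\<in>SL. (0 :: 'a::{field,finite} ^ 'n ^ 'n) = B + C)
         \<and> (\<exists>B\<in>SL. \<exists>C\<in>SL. \<exists>D\<in>SL. (0 :: 'a::{field,finite} ^ 'n ^ 'n) = B + C + D))"
proof (intro conjI impI allI)
  fix A :: "'a::{field,finite} ^ 'n ^ 'n"
  assume "A \<noteq> 0"
  then show "\<exists>B\<in>SL. \<exists>C\<in>SL. A = B + C" using nonzero_S2[OF assms] unfolding S2_def by blast
next
  assume "even CARD('n) \<or> CHAR('a) = 2"
  then have h: "(-1::'a)^CARD('n) = 1" using cond_iff by blast
  have "det (- mat 1 :: 'a^'n^'n) = 1" using h by (simp add: det_neg)
  then show "\<exists>B\<in>SL. \<exists>C\<in>SL. (0 :: 'a ^ 'n ^ 'n) = B + C" unfolding SL_def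
    by (intro bexI[of _ "mat 1"] bexI[of _ "- mat 1"]) auto
next
  assume "\<not> (even CARD('n) \<or> CHAR('a) = 2)"
  then have h: "(-1::'a)^CARD('n) \<noteq> 1" using cond_iff by blast
  show "\<not> (\<exists>B\<in>SL. \<exists>C\<in>SL. (0 :: 'a ^ 'n ^ 'n) = B + C)"
  proof
    assume "\<exists>B\<in>SL. \<exists>C\<in>SL. (0 :: 'a ^ 'n ^ 'n) = B + C"
    then obtain B C :: "'a^'n^'n" where B: "det B = 1" and C: "det C = 1" and BC: "0 = B + C"
      unfolding SL_def by auto
    then have "C = - B" by (metis add.commute add_eq_0_iff)
    then have "det C = (-1)^CARD('n)" using B by (simp add: det_neg)
    with C h show False by simp
  qed
next
  have ne: "(- mat 1 :: 'a^'n^'n) \<noteq> 0"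
  proof
    assume "(- mat 1 :: 'a^'n^'n) = 0"
    then have "(- mat 1 :: 'a^'n^'n) $ undefined $ undefined = 0" by simp
    then show False by (simp add: mat_def)
  qed
  obtain B C where B: "B \<in> SL" and C: "C \<in> SL" and BC: "(- mat 1 :: 'a^'n^'n) = B + C"
    using nonzero_S2[OF assms ne] unfolding S2_def by blast
  have I: "(mat 1 :: 'a^'n^'n) \<in> SL" by (simp add: SL_def)
  have "(0 :: 'a ^ 'n ^ 'n) = B + C + mat 1" using BC by (metis add.commute add_eq_0_iff)
  then show "\<exists>B\<in>SL. \<exists>C\<in>SL. \<exists>D\<in>SL. (0 :: 'a ^ 'n ^ 'n) = B + C + D" using B C I by blast
qed


end
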